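(* Let $q$ be a nonzero real number with $q\neq-1$, and for $k\ge0$ let $$A_k=\begin{pmatrix} x & q^k(x^2+s)\\ 1 & q^kx\end{pmatrix}.$$ Then for every $n\ge1$, $$\begin{pmatrix} T_n(x,s,q) & (x^2+s)U_{n-1}(x,qs,q)\\ U_{n-1}(x,s,q) & T_n\!\left(x,\frac{s}{q},q\right)\end{pmatrix}=A_{n-1}A_{n-2}\cdots A_0.$$
   Context: $T_0=1$, $T_1=x$, $T_n(x,s,q)=(1+q^{n-1})x\,T_{n-1}(x,s,q)+q^{n-1}s\,T_{n-2}(x,s,q)$ for $n\ge2$; $U_{-1}=0$, $U_0=1$, $U_n(x,s,q)=(1+q^{n})x\,U_{n-1}(x,s,q)+q^{n-1}s\,U_{n-2}(x,s,q)$ for $n\ge1$. *)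

theory Defs
  imports "HOL-Analysis.Analysis"
begin

fun T :: "nat \<Rightarrow> real \<Rightarrow> real \<Rightarrow> real \<Rightarrow> real" where
  "T 0 x s q = 1"
| "T (Suc 0) x s q = x"
| "T (Suc (Suc n)) x s q =
     (1 + q ^ (Suc n)) * x * T (Suc n) x s q + q ^ (Suc n) * s * T n x s q"

text \<open>U n for n \<ge> 0 (with U (-1) = 0 built into the n = 1 case).\<close>
fun U :: "nat \<Rightarrow> real \<Rightarrow> real \<Rightarrow> real \<Rightarrow> real" where
  "U 0 x s q = 1"
| "U (Suc 0) x s q = (1 + q) * x"
| "U (Suc (Suc n)) x s q =
     (1 + q ^ (Suc (Suc n))) * x * U (Suc n) x s q + q ^ (Suc n) * s * U n x s q"

definition mat2 :: "real \<Rightarrow> real \<Rightarrow> real \<Rightarrow> real \<Rightarrow> real^2^2" where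
  "mat2 a b c d = vector [vector [a, b], vector [c, d]]"

definition Amat :: "real \<Rightarrow> real \<Rightarrow> real \<Rightarrow> nat \<Rightarrow> real^2^2" where
  "Amat x s q k = mat2 x (q ^ k * (x\<^sup>2 + s)) 1 (q ^ k * x)"

fun Aprod :: "real \<Rightarrow> real \<Rightarrow> real \<Rightarrow> nat \<Rightarrow> real^2^2" where
  "Aprod x s q 0 = mat 1"
| "Aprod x s q (Suc n) = Amat x s q n ** Aprod x s q n"

end

theory Submission
  imports Defs
begin

lemma mat2_mult: "mat2 a b c d ** mat2 e f g h = mat2 (a*e+b*g) (a*f+b*h) (c*e+d*g) (c*f+d*h)"
  unfolding mat2_def
  by (simp add: vec_eq_iff forall_2 matrix_matrix_mult_def sum_2 vector_2)

lemma mat2_one: "mat 1 = mat2 1 0 0 1"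
  unfolding mat2_def
  by (simp add: vec_eq_iff forall_2 mat_def vector_2)


lemma TU1: "n \<ge> 1 \<Longrightarrow> U n x s q = T n x s q + q^n * x * U (n-1) x s q
   \<and> T (Suc n) x s q = x * U n x s q + q^n * s * U (n-1) x s q"
proof (induction n rule: dec_induct)
  case base then show ?case by (simp add: algebra_simps)
next
  case (step n)
  obtain m where m: "n = Suc m" using step(1) by (cases n) auto
  define p where "p = q^n"
  have h1: "U n x s q = T n x s q + p * x * U m x s q" and h2: "T (Suc n) x s q = x * U n x s q + p * s * U m x s q"
    using step(3) unfolding m p_def by auto
  have u: "U (Suc n) x s q = (1 + q*p) * x * U n x s q + p * s * U m x s q"
    unfolding m p_def by simp
  have t: "T (Suc (Suc n)) x s q = (1 + q*p) * x * T (Suc n) x s q + q*p * s * T n x s q"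
    unfolding p_def by simp
  have a: "U (Suc n) x s q = T (Suc n) x s q + (q*p) * x * U n x s q"
    using u h2 by (simp add: algebra_simps)
  have b: "T (Suc (Suc n)) x s q = x * U (Suc n) x s q + (q*p) * s * U n x s q"
    using t a h1 h2 by (simp add: algebra_simps)
  show ?case using a b m by (simp add: p_def)
qed

lemma TU2: "n \<ge> 1 \<Longrightarrow> U n x (q^2*t) q = x * U (n-1) x (q^2*t) q + q^n * T n x t q
   \<and> T (Suc n) x t q = (x^2 + q*t) * U (n-1) x (q^2*t) q + q^n * x * T n x t q"
proof (induction n rule: dec_induct)
  case base then show ?case by (simp add: algebra_simps power2_eq_square)
next
  case (step n)
  obtain m where m: "n = Suc m" using step(1) by (cases n) auto
  define p where "p = q^n"
  define r where "r = q^2*t"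
  have h1: "U n x r q = x * U m x r q + p * T n x t q" and h2: "T (Suc n) x t q = (x^2 + q*t) * U m x r q + p * x * T n x t q"
    using step(3) unfolding m p_def r_def by auto
  have u: "U (Suc n) x r q = (1 + q*p) * x * U n x r q + p * r * U m x r q"
    unfolding m p_def by simp
  have t: "T (Suc (Suc n)) x t q = (1 + q*p) * x * T (Suc n) x t q + q*p * t * T n x t q"
    unfolding p_def by simp
  have a: "U (Suc n) x r q = x * U n x r q + (q*p) * T (Suc n) x t q"
    using u h1 h2 unfolding r_def by (simp add: algebra_simps power2_eq_square)
  have b: "T (Suc (Suc n)) x t q = (x^2 + q*t) * U n x r q + (q*p) * x * T (Suc n) x t q"
    using t h1 h2 by (simp add: algebra_simps power2_eq_square)
  show ?case using a b m by (simp add: p_def r_def)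
qed

theorem theorem2p9:
  fixes q x s :: real and n :: nat
  assumes "q \<noteq> 0" and "q \<noteq> -1" and "n \<ge> 1"
  shows "mat2 (T n x s q) ((x\<^sup>2 + s) * U (n - 1) x (q * s) q)
              (U (n - 1) x s q) (T n x (s / q) q)
         = Aprod x s q n"
  using assms(3)
proof (induction n rule: dec_induct)
  case base
  show ?case by (simp add: Amat_def mat2_one mat2_mult)
next
  case (step n)
  have e1: "q^2 * (s / q) = q * s" using assms(1) by (simp add: power2_eq_square)
  have e2: "q * (s / q) = s" using assms(1) by simp
  have A: "U n x s q = T n x s q + q^n * x * U (n-1) x s q"
     "T (Suc n) x s q = x * U n x s q + q^n * s * U (n-1) x s q"
    using TU1[OF step(1), of x s q] by auto
  have B: "U n x (q * s) q = x * U (n-1) x (q * s) q + q^n * T n x (s / q) q"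
     "T (Suc n) x (s / q) q = (x^2 + s) * U (n-1) x (q * s) q + q^n * x * T n x (s / q) q"
    using TU2[OF step(1), of x q "s / q"] unfolding e1 e2 by auto
  have "Aprod x s q (Suc n) = Amat x s q n ** mat2 (T n x s q) ((x\<^sup>2 + s) * U (n - 1) x (q * s) q)
              (U (n - 1) x s q) (T n x (s / q) q)" using step(3) by simp
  also have "\<dots> = mat2 (T (Suc n) x s q) ((x\<^sup>2 + s) * U (Suc n - 1) x (q * s) q)
              (U (Suc n - 1) x s q) (T (Suc n) x (s / q) q)"
    unfolding Amat_def mat2_mult by (simp add: A B algebra_simps power2_eq_square)
  finally show ?case by simp
qed
end
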